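(* Let $\sigma=(a_1,\ldots,a_s)$ be a partition of the positive integer $r\ge 2$ with $a_1\ge a_2\ge\cdots\ge a_s\ge 1$, let $n\ge s$ and $q\ge a_1$, and let $H=H(n,r,q\mid\sigma)$. Then the independence number of $H$ is \[\alpha(H)=\max\{(j-1)q+(a_j-1)(n-j+1)\;:\; j=1,\ldots,s\}.\]
   Context: A $\sigma$-hypergraph $H=H(n,r,q\mid\sigma)$, for a partition $\sigma=(a_1,\ldots,a_s)$ of $r$ with $s$ parts, is the $r$-uniform hypergraph whose vertex set is the disjoint union of $n$ classes $V_1,\ldots,V_n$, each of size $q$; an $r$-subset $K$ of vertices is an edge iff the multiset of non-zero values $|K\cap V_i|$ ($1\le i\le n$) equals $\sigma$. A vertex set is independent if it contains no edge; $\alpha(H)$ is the maximum size of an independent set. *)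

theory Defs
  imports Main "HOL-Library.Multiset"
begin

definition sh_vertices :: "nat \<Rightarrow> nat \<Rightarrow> (nat \<times> nat) set" where
  "sh_vertices n q = {0..<n} \<times> {0..<q}"

definition sh_class :: "nat \<Rightarrow> nat \<Rightarrow> (nat \<times> nat) set" where
  "sh_class q i = {i} \<times> {0..<q}"

definition sh_profile :: "nat \<Rightarrow> nat \<Rightarrow> (nat \<times> nat) set \<Rightarrow> nat multiset" where
  "sh_profile n q K = filter_mset (\<lambda>k. k \<noteq> 0) (image_mset (\<lambda>i. card (K \<inter> sh_class q i)) (mset [0..<n]))"

definition sh_edge :: "nat \<Rightarrow> nat \<Rightarrow> nat \<Rightarrow> nat list \<Rightarrow> (nat \<times> nat) set \<Rightarrow> bool" where
  "sh_edge n r q \<sigma> K \<longleftrightarrow> K \<subseteq> sh_vertices n q \<and> card K = r \<and> sh_profile n q K = mset \<sigma>"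

definition sh_independent :: "nat \<Rightarrow> nat \<Rightarrow> nat \<Rightarrow> nat list \<Rightarrow> (nat \<times> nat) set \<Rightarrow> bool" where
  "sh_independent n r q \<sigma> I \<longleftrightarrow> I \<subseteq> sh_vertices n q \<and> (\<forall>K. sh_edge n r q \<sigma> K \<longrightarrow> \<not> K \<subseteq> I)"

definition sh_alpha :: "nat \<Rightarrow> nat \<Rightarrow> nat \<Rightarrow> nat list \<Rightarrow> nat" where
  "sh_alpha n r q \<sigma> = Max (card ` {I. sh_independent n r q \<sigma> I})"

end

theory Submission imports Defs begin

lemma finite_class[simp]: "finite (sh_class q i)"
  unfolding sh_class_def by simp

lemma card_class[simp]: "card (sh_class q i) = q"
  unfolding sh_class_def by simp

lemma class_le: "card (I \<inter> sh_class q i) \<le> q"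
  by (metis card_class card_mono finite_class inf_le2)

lemma class_disj: "i \<noteq> j \<Longrightarrow> sh_class q i \<inter> sh_class q j = {}"
  unfolding sh_class_def by auto

lemma finite_vertices[simp]: "finite (sh_vertices n q)"
  unfolding sh_vertices_def by simp

lemma card_decomp:
  assumes "I \<subseteq> sh_vertices n q"
  shows "card I = (\<Sum>i<n. card (I \<inter> sh_class q i))"
proof -
  have eq: "I = (\<Union>i\<in>{..<n}. I \<inter> sh_class q i)"
    using assms unfolding sh_vertices_def sh_class_def by auto
  have fin: "finite I" by (rule finite_subset[OF assms finite_vertices])
  have "card (\<Union>i\<in>{..<n}. I \<inter> sh_class q i) = (\<Sum>i<n. card (I \<inter> sh_class q i))"
    by (rule card_UN_disjoint) (use fin class_disj in auto)
  then show ?thesis using eq by simp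
qed

lemma count_big:
  assumes I: "I \<subseteq> sh_vertices n q"
    and kn: "k \<le> n" and aq: "a \<le> q + 1"
    and big: "card I > k * q + (a - 1) * (n - k)"
  shows "card {i\<in>{..<n}. a \<le> card (I \<inter> sh_class q i)} \<ge> k + 1"
proof (rule ccontr)
  define b where "b i = card (I \<inter> sh_class q i)" for i
  define C where "C = {i\<in>{..<n}. a \<le> b i}"
  assume "\<not> ?thesis"
  hence cC: "card C \<le> k" unfolding C_def b_def by simp
  have CS: "C \<subseteq> {..<n}" unfolding C_def by auto
  have "card I = (\<Sum>i<n. b i)" using card_decomp[OF I] b_def by simp
  also have "\<dots> = (\<Sum>i\<in>C. b i) + (\<Sum>i\<in>{..<n} - C. b i)"
    using CS by (metis finite_lessThan sum.subset_diff add.commute)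
  also have "(\<Sum>i\<in>C. b i) \<le> (\<Sum>i\<in>C. q)"
    by (rule sum_mono) (simp add: b_def class_le)
  also have "(\<Sum>i\<in>{..<n} - C. b i) \<le> (\<Sum>i\<in>{..<n} - C. a - 1)"
    by (rule sum_mono) (auto simp: C_def)
  finally have le: "card I \<le> card C * q + (n - card C) * (a - 1)"
    using CS by (simp add: card_Diff_subset finite_subset)
  obtain d where d: "k = card C + d" using cC le_Suc_ex by blast
  have "n - card C = (n - k) + d" using d kn by simp
  hence "(n - card C) * (a - 1) = (n - k) * (a - 1) + d * (a - 1)"
    by (simp add: add_mult_distrib)
  moreover have "d * (a - 1) \<le> d * q" using aq by (intro mult_le_mono2) linarith
  ultimately have "card C * q + (n - card C) * (a - 1) \<le> k * q + (a - 1) * (n - k)"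
    using d by (simp add: algebra_simps)
  thus False using le big by linarith
qed

lemma greedy:
  fixes a :: "nat \<Rightarrow> nat" and b :: "nat \<Rightarrow> nat"
  assumes cnt: "\<forall>k<s. card {i\<in>{..<n}. a k \<le> b i} \<ge> k + 1"
  shows "m \<le> s \<Longrightarrow> \<exists>c. inj_on c {..<m} \<and> (\<forall>k<m. c k < n \<and> a k \<le> b (c k))"
proof (induction m)
  case 0
  then show ?case by simp
next
  case (Suc m)
  then obtain c where c: "inj_on c {..<m}" "\<forall>k<m. c k < n \<and> a k \<le> b (c k)" by auto
  define C where "C = {i\<in>{..<n}. a m \<le> b i}"
  have "card C \<ge> m + 1" using cnt Suc.prems unfolding C_def by auto
  moreover have "card (c ` {..<m}) \<le> m" using card_image_le[of "{..<m}" c] by simp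
  ultimately have "\<not> C \<subseteq> c ` {..<m}"
    by (metis card_mono finite_imageI finite_lessThan le_trans not_less_eq_eq Suc_eq_plus1)
  then obtain i where i: "i \<in> C" "i \<notin> c ` {..<m}" by auto
  define c' where "c' = c(m := i)"
  have "inj_on c' {..<Suc m}"
  proof -
    have "inj_on c' {..<m}" using c(1) unfolding c'_def inj_on_def by auto
    moreover have "c' m \<notin> c' ` {..<m}" using i(2) unfolding c'_def by auto
    ultimately show ?thesis by (simp add: lessThan_Suc)
  qed
  moreover have "\<forall>k<Suc m. c' k < n \<and> a k \<le> b (c' k)"
    using c(2) i(1) unfolding c'_def C_def by (auto simp: less_Suc_eq)
  ultimately show ?case by blast
qed

lemma profile_eq:
  fixes g :: "nat \<Rightarrow> nat"
  assumes inj: "inj_on c {..<length \<sigma>}" and cn: "\<forall>k<length \<sigma>. c k < n"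
    and gc: "\<forall>k<length \<sigma>. g (c k) = \<sigma> ! k"
    and g0: "\<forall>i. i \<notin> c ` {..<length \<sigma>} \<longrightarrow> g i = 0"
    and nz: "\<forall>x\<in>set \<sigma>. x \<noteq> 0"
  shows "filter_mset (\<lambda>k. k \<noteq> 0) (image_mset g (mset [0..<n])) = mset \<sigma>"
proof -
  define A where "A = c ` {..<length \<sigma>}"
  have AS: "A \<subseteq> {..<n}" using cn unfolding A_def by auto
  have "{..<n} = A \<union> ({..<n} - A)" using AS by auto
  hence "mset [0..<n] = mset_set A + mset_set ({..<n} - A)"
    by (metis mset_set_upto_eq_mset_upto mset_set_Union finite_lessThan finite_subset AS
        finite_Diff Diff_disjoint)
  hence "filter_mset (\<lambda>k. k \<noteq> 0) (image_mset g (mset [0..<n])) =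
     filter_mset (\<lambda>k. k \<noteq> 0) (image_mset g (mset_set A)) +
     filter_mset (\<lambda>k. k \<noteq> 0) (image_mset g (mset_set ({..<n} - A)))" by simp
  also have "filter_mset (\<lambda>k. k \<noteq> 0) (image_mset g (mset_set ({..<n} - A))) = {#}"
    using g0 unfolding A_def by (auto simp: filter_empty_mset)
  also have "image_mset g (mset_set A) = image_mset g (image_mset c (mset_set {..<length \<sigma>}))"
    unfolding A_def using image_mset_mset_set[OF inj] by simp
  also have "\<dots> = image_mset ((!) \<sigma>) (mset_set {..<length \<sigma>})"
    unfolding multiset.map_comp by (rule image_mset_cong) (use gc in auto)
  also have "\<dots> = mset \<sigma>"
    by (metis mset_set_upto_eq_mset_upto mset_map map_nth)
  also have "filter_mset (\<lambda>k. k \<noteq> 0) (mset \<sigma>) = mset \<sigma>"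
    using nz by (simp add: filter_mset_eq_conv)
  finally show ?thesis by simp
qed

lemma edge_exists:
  assumes I: "I \<subseteq> sh_vertices n q" and inj: "inj_on c {..<length \<sigma>}"
    and cb: "\<forall>k<length \<sigma>. c k < n \<and> \<sigma> ! k \<le> card (I \<inter> sh_class q (c k))"
    and nz: "\<forall>x\<in>set \<sigma>. x \<noteq> 0" and r: "sum_list \<sigma> = r"
  shows "\<exists>K. sh_edge n r q \<sigma> K \<and> K \<subseteq> I"
proof -
  have "\<forall>k<length \<sigma>. \<exists>S. S \<subseteq> I \<inter> sh_class q (c k) \<and> card S = \<sigma> ! k"
    using cb by (meson obtain_subset_with_card_n)
  then obtain S where S: "\<And>k. k < length \<sigma> \<Longrightarrow> S k \<subseteq> I \<inter> sh_class q (c k) \<and> card (S k) = \<sigma> ! k"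
    by metis
  define K where "K = (\<Union>k\<in>{..<length \<sigma>}. S k)"
  have KI: "K \<subseteq> I" using S unfolding K_def by blast
  have finS: "finite (S k)" if "k < length \<sigma>" for k
    using S[OF that] by (meson finite_class finite_subset le_infE)
  have KC: "K \<inter> sh_class q (c k) = S k" if k: "k < length \<sigma>" for k
  proof
    show "S k \<subseteq> K \<inter> sh_class q (c k)" using S[OF k] k unfolding K_def by blast
    show "K \<inter> sh_class q (c k) \<subseteq> S k"
    proof
      fix x assume x: "x \<in> K \<inter> sh_class q (c k)"
      then obtain l where l: "l < length \<sigma>" "x \<in> S l" unfolding K_def by auto
      have "x \<in> sh_class q (c l)" using S[OF l(1)] l(2) by blast
      hence "c l = c k" using x class_disj by blast
      hence "l = k" using inj l(1) k unfolding inj_on_def by auto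
      thus "x \<in> S k" using l by simp
    qed
  qed
  have K0: "K \<inter> sh_class q i = {}" if i: "i \<notin> c ` {..<length \<sigma>}" for i
  proof -
    have "S l \<inter> sh_class q i = {}" if l: "l < length \<sigma>" for l
    proof -
      have "c l \<noteq> i" using i l by auto
      thus ?thesis using S[OF l] class_disj by blast
    qed
    thus ?thesis unfolding K_def by blast
  qed
  have "card K = (\<Sum>k<length \<sigma>. card (S k))"
    unfolding K_def
  proof (rule card_UN_disjoint)
    show "\<forall>i\<in>{..<length \<sigma>}. \<forall>j\<in>{..<length \<sigma>}. i \<noteq> j \<longrightarrow> S i \<inter> S j = {}"
    proof (intro ballI impI)
      fix i j assume ij: "i \<in> {..<length \<sigma>}" "j \<in> {..<length \<sigma>}" "i \<noteq> j"
      hence "c i \<noteq> c j" using inj unfolding inj_on_def by auto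
      thus "S i \<inter> S j = {}" using S ij class_disj by (meson disjoint_iff le_infE lessThan_iff subsetD)
    qed
  qed (use finS in auto)
  also have "\<dots> = sum_list \<sigma>" using S by (simp add: sum_list_sum_nth lessThan_atLeast0)
  finally have cK: "card K = r" using r by simp
  have "sh_profile n q K = mset \<sigma>"
    unfolding sh_profile_def
    by (rule profile_eq[OF inj]) (use cb KC K0 S nz in auto)
  moreover have "K \<subseteq> sh_vertices n q" using KI I by blast
  ultimately show ?thesis using cK KI unfolding sh_edge_def by blast
qed

lemma indep_construct:
  assumes j1: "1 \<le> j" and js: "j \<le> length \<sigma>" and sn: "length \<sigma> \<le> n"
    and dec: "sorted_wrt (\<ge>) \<sigma>" and pos: "\<forall>a\<in>set \<sigma>. a \<ge> 1"
    and aq: "\<sigma> ! (j - 1) \<le> q"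
  shows "\<exists>I. sh_independent n r q \<sigma> I \<and> card I = (j - 1) * q + (\<sigma> ! (j - 1) - 1) * (n - j + 1)"
proof -
  define a where "a = \<sigma> ! (j - 1)"
  define m where "m = j - 1"
  have a1: "a \<ge> 1" using pos js j1 unfolding a_def by (simp add: nth_mem)
  define I where "I = {0..<m} \<times> {0..<q} \<union> {m..<n} \<times> {0..<a - 1}"
  have cI: "card I = m * q + (a - 1) * (n - m)"
    unfolding I_def by (subst card_Un_disjoint) auto
  have IV: "I \<subseteq> sh_vertices n q"
    using aq sn js unfolding I_def sh_vertices_def a_def m_def by auto
  have indep: "\<not> K \<subseteq> I" if K: "sh_edge n r q \<sigma> K" for K
  proof
    assume KI: "K \<subseteq> I"
    define g where "g i = card (K \<inter> sh_class q i)" for i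
    have gsmall: "g i < a" if i: "i \<ge> m" for i
    proof -
      have "K \<inter> sh_class q i \<subseteq> {i} \<times> {0..<a - 1}"
        using KI i unfolding I_def sh_class_def by auto
      hence "g i \<le> a - 1" unfolding g_def
        by (metis card_cartesian_product_singleton card_atLeastLessThan card_mono finite_SigmaI
            finite_atLeastLessThan finite.emptyI finite.insertI diff_zero)
      thus ?thesis using a1 by linarith
    qed
    have "size (filter_mset (\<lambda>x. a \<le> x) (sh_profile n q K)) =
        size (filter_mset (\<lambda>x. a \<le> x) (image_mset g (mset [0..<n])))"
      unfolding sh_profile_def g_def filter_filter_mset
      by (rule arg_cong[where f=size], rule filter_mset_cong) (use a1 in auto)
    also have "\<dots> = length (filter (\<lambda>i. a \<le> g i) [0..<n])"
      by (metis filter_mset_image_mset size_image_mset mset_filter size_mset)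
    also have "\<dots> = card ({i. a \<le> g i} \<inter> {0..<n})"
      by (metis distinct_upt set_upt distinct_length_filter)
    also have "\<dots> \<le> card {0..<m}"
      by (rule card_mono) (use gsmall in \<open>auto simp: not_le[symmetric]\<close>)
    finally have L: "size (filter_mset (\<lambda>x. a \<le> x) (sh_profile n q K)) \<le> m" by simp
    have "j = card {..<j}" by simp
    also have "\<dots> \<le> card {i. i < length \<sigma> \<and> a \<le> \<sigma> ! i}"
    proof (rule card_mono)
      show "{..<j} \<subseteq> {i. i < length \<sigma> \<and> a \<le> \<sigma> ! i}"
      proof
        fix i assume "i \<in> {..<j}"
        hence i: "i < j" by simp
        show "i \<in> {i. i < length \<sigma> \<and> a \<le> \<sigma> ! i}"
        proof (cases "i = j - 1")
          case True thus ?thesis using i js unfolding a_def by simp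
        next
          case False
          hence "i < j - 1" using i by simp
          hence "\<sigma> ! (j - 1) \<le> \<sigma> ! i" using sorted_wrt_nth_less[OF dec] js j1 by fastforce
          thus ?thesis using i js unfolding a_def by simp
        qed
      qed
    qed simp
    also have "\<dots> = size (filter_mset (\<lambda>x. a \<le> x) (mset \<sigma>))"
      by (simp add: length_filter_conv_card flip: mset_filter)
    also have "\<dots> = size (filter_mset (\<lambda>x. a \<le> x) (sh_profile n q K))"
      using K unfolding sh_edge_def by simp
    finally show False using L j1 unfolding m_def by linarith
  qed
  have "n - m = n - j + 1" using j1 js sn unfolding m_def by linarith
  thus ?thesis using cI IV indep unfolding sh_independent_def m_def a_def by (metis mult.commute)
qed

theorem corollary2p9:
  fixes \<sigma> :: "nat list" and r n q :: nat
  assumes "r \<ge> 2"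
    and "sum_list \<sigma> = r"
    and "sorted_wrt (\<ge>) \<sigma>"
    and "\<forall>a\<in>set \<sigma>. a \<ge> 1"
    and "n \<ge> length \<sigma>"
    and "q \<ge> \<sigma> ! 0"
  shows "sh_alpha n r q \<sigma> =
    Max ((\<lambda>j. (j - 1) * q + (\<sigma> ! (j - 1) - 1) * (n - j + 1)) ` {1..length \<sigma>})"
proof -
  note r2 = assms(1) and sr = assms(2) and dec = assms(3) and pos = assms(4)
    and sn = assms(5) and q0 = assms(6)
  define f where "f j = (j - 1) * q + (\<sigma> ! (j - 1) - 1) * (n - j + 1)" for j
  define M where "M = Max (f ` {1..length \<sigma>})"
  have ne: "\<sigma> \<noteq> []" using r2 sr by auto
  hence s1: "length \<sigma> \<ge> 1" by (cases \<sigma>) auto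
  have aq: "\<sigma> ! k \<le> q" if "k < length \<sigma>" for k
  proof (cases "k = 0")
    case True thus ?thesis using q0 by simp
  next
    case False
    hence "\<sigma> ! k \<le> \<sigma> ! 0" using sorted_wrt_nth_less[OF dec, of 0 k] that by simp
    thus ?thesis using q0 by simp
  qed
  have nz: "\<forall>x\<in>set \<sigma>. x \<noteq> 0" using pos by auto
  have finF: "finite (f ` {1..length \<sigma>})" by simp
  have neF: "f ` {1..length \<sigma>} \<noteq> {}" using s1 by auto
  have upper: "card I \<le> M" if I: "sh_independent n r q \<sigma> I" for I
  proof (rule ccontr)
    assume "\<not> card I \<le> M"
    hence big: "card I > f j" if "j \<in> {1..length \<sigma>}" for j
    proof -
      have "f j \<le> M" using Max_ge[OF finF, of "f j"] that unfolding M_def by blast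
      thus ?thesis using \<open>\<not> card I \<le> M\<close> by linarith
    qed
    have IV: "I \<subseteq> sh_vertices n q" using I unfolding sh_independent_def by simp
    have cnt: "\<forall>k<length \<sigma>. card {i\<in>{..<n}. \<sigma> ! k \<le> card (I \<inter> sh_class q i)} \<ge> k + 1"
    proof (intro allI impI)
      fix k assume k: "k < length \<sigma>"
      have "card I > f (k + 1)" using big k by simp
      moreover have "f (k + 1) = k * q + (\<sigma> ! k - 1) * (n - k)"
      proof -
        have "n - (k + 1) + 1 = n - k" using k sn by linarith
        thus ?thesis unfolding f_def by simp
      qed
      ultimately have "card I > k * q + (\<sigma> ! k - 1) * (n - k)" by simp
      thus "card {i\<in>{..<n}. \<sigma> ! k \<le> card (I \<inter> sh_class q i)} \<ge> k + 1"
        by (intro count_big[OF IV]) (use k sn aq[OF k] in auto)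
    qed
    obtain c where c: "inj_on c {..<length \<sigma>}"
      "\<forall>k<length \<sigma>. c k < n \<and> \<sigma> ! k \<le> card (I \<inter> sh_class q (c k))"
      using greedy[where a="(!) \<sigma>" and b="\<lambda>i. card (I \<inter> sh_class q i)" and s="length \<sigma>" and n=n and m="length \<sigma>", OF cnt] by auto
    obtain K where "sh_edge n r q \<sigma> K" "K \<subseteq> I"
      using edge_exists[OF IV c(1) c(2) nz sr] by blast
    thus False using I unfolding sh_independent_def by blast
  qed
  obtain j where j: "j \<in> {1..length \<sigma>}" "f j = M"
    using Max_in[OF finF neF] unfolding M_def by auto
  obtain I where I: "sh_independent n r q \<sigma> I" "card I = M"
    using indep_construct[of j \<sigma> n q r] j dec pos sn aq unfolding f_def by fastforce
  have finA: "finite (card ` {I. sh_independent n r q \<sigma> I})"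
  proof -
    have "{I. sh_independent n r q \<sigma> I} \<subseteq> Pow (sh_vertices n q)"
      unfolding sh_independent_def by auto
    thus ?thesis by (meson finite_Pow_iff finite_imageI finite_subset finite_vertices)
  qed
  have "sh_alpha n r q \<sigma> = M"
    unfolding sh_alpha_def
    by (rule Max_eqI[OF finA]) (use upper I in auto)
  thus ?thesis unfolding M_def f_def .
qed

end
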